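(* For every odd prime $p$, writing $m = \frac{p-1}{2}$, $$\sum_{\substack{k_1,k_2,k_3,k_4=0\\ k_1+k_2+k_3+k_4 = p-1}}^{m}\ \prod_{i=1}^4 \binom{m}{k_i}\binom{m+k_i}{k_i} \equiv \sum_{\substack{k_1,k_2,k_3,k_4=0\\ k_1+k_2 = k_3+k_4}}^{m}\ \prod_{i=1}^4 \binom{m}{k_i}\binom{m+k_i}{k_i} \pmod{p^2}.$$
   Context: Both sums run over integers $0 \le k_i \le m$ subject to the indicated linear constraint. *)

theory Defs
  imports "HOL-Number_Theory.Number_Theory"
begin

definition term4 :: "nat \<Rightarrow> (nat \<Rightarrow> nat) \<Rightarrow> int" where
  "term4 m k = (\<Prod>i\<in>{1..4::nat}. int (m choose k i) * int ((m + k i) choose k i))"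

end

theory Submission
  imports Defs
begin

lemma choose_step: "Suc k * (m choose Suc k) = (m - k) * (m choose k)"
  by (metis binomial_absorption binomial_absorb_comp)

lemma fact_cong:
  fixes p m :: nat
  assumes "p = 2*m+1"
  shows "k \<le> m \<Longrightarrow> [int (fact k) * int ((m+k) choose k) = (-1)^k * (int (fact k) * int (m choose k))] (mod int p)"
proof (induction k)
  case 0
  then show ?case by simp
next
  case (Suc k)
  then have IH: "[int (fact k) * int ((m+k) choose k) = (-1)^k * (int (fact k) * int (m choose k))] (mod int p)" by simp
  have e1: "int (fact (Suc k)) * int ((m + Suc k) choose Suc k) = int (Suc (m+k)) * (int (fact k) * int ((m+k) choose k))"
  proof -
    have "Suc k * ((Suc (m+k)) choose Suc k) = Suc (m+k) * ((m+k) choose k)" by (rule Suc_times_binomial)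
    then have H: "int (Suc k) * int ((Suc (m+k)) choose Suc k) = int (Suc (m+k)) * int ((m+k) choose k)"
      by (metis of_nat_mult)
    have "int (fact (Suc k)) * int ((m + Suc k) choose Suc k) = int (fact k) * (int (Suc k) * int ((Suc (m+k)) choose Suc k))"
      by (simp only: fact_Suc of_nat_id of_nat_mult mult_ac add_Suc_right)
    also have "\<dots> = int (Suc (m+k)) * (int (fact k) * int ((m+k) choose k))"
      by (simp only: H mult_ac)
    finally show ?thesis .
  qed
  have e2: "int (fact (Suc k)) * int (m choose Suc k) = int (m - k) * (int (fact k) * int (m choose k))"
  proof -
    have H: "int (Suc k) * int (m choose Suc k) = int (m - k) * int (m choose k)"
      by (metis choose_step of_nat_mult)
    have "int (fact (Suc k)) * int (m choose Suc k) = int (fact k) * (int (Suc k) * int (m choose Suc k))"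
      by (simp only: fact_Suc of_nat_id of_nat_mult mult_ac)
    also have "\<dots> = int (m - k) * (int (fact k) * int (m choose k))"
      by (simp only: H mult_ac)
    finally show ?thesis .
  qed
  have e3: "[int (Suc (m+k)) = - int (m - k)] (mod int p)"
  proof -
    have "int (Suc (m+k)) = - int (m - k) + int p" using Suc.prems assms by simp
    then show ?thesis by (simp add: cong_def)
  qed
  have "[int (fact (Suc k)) * int ((m + Suc k) choose Suc k) = (- int (m - k)) * ((-1)^k * (int (fact k) * int (m choose k)))] (mod int p)"
    unfolding e1 by (rule cong_mult[OF e3 IH])
  then show ?case using e2 by (simp add: algebra_simps)
qed

lemma binom_cong:
  fixes p m :: nat
  assumes "prime p" "p = 2*m+1" "k \<le> m"
  shows "[int ((m+k) choose k) = (-1)^k * int (m choose k)] (mod int p)"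
proof -
  have "coprime (int (fact k)) (int p)"
  proof -
    have "\<not> p dvd fact k" using prime_dvd_fact_iff[OF assms(1)] assms by simp
    then have "coprime p (fact k)" using assms(1) by (simp add: prime_imp_coprime)
    then show ?thesis by (metis coprime_commute coprime_int_iff)
  qed
  moreover have "[int (fact k) * int ((m+k) choose k) = int (fact k) * ((-1)^k * int (m choose k))] (mod int p)"
    using fact_cong[OF assms(2) assms(3)] by (simp add: algebra_simps)
  ultimately show ?thesis using cong_mult_lcancel by blast
qed

definition aa :: "nat \<Rightarrow> nat \<Rightarrow> int" where
  "aa m k = int (m choose k) * int ((m + k) choose k)"

lemma aa_sym:
  fixes p m :: nat
  assumes "prime p" "p = 2*m+1" "k \<le> m"
  shows "[aa m k = (-1)^m * aa m (m - k)] (mod int p)"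
proof -
  have h1: "[aa m k = (-1)^k * int (m choose k)^2] (mod int p)"
    using cong_mult[OF cong_refl[of "int (m choose k)"] binom_cong[OF assms]]
    by (simp add: aa_def power2_eq_square algebra_simps)
  have h2: "[aa m (m-k) = (-1)^(m-k) * int (m choose k)^2] (mod int p)"
    using cong_mult[OF cong_refl[of "int (m choose (m-k))"] binom_cong[OF assms(1,2), of "m-k"]]
    by (simp add: aa_def power2_eq_square algebra_simps binomial_symmetric[OF assms(3), symmetric])
  have h3: "(-1::int)^m * (-1)^(m-k) = (-1)^k"
  proof -
    have "(-1::int)^m * (-1)^(m-k) = (-1)^(m + (m-k))" by (simp add: power_add)
    also have "m + (m-k) = k + 2*(m-k)" using assms(3) by simp
    also have "(-1::int)^(k + 2*(m-k)) = (-1)^k" by (simp add: power_add power_mult)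
    finally show ?thesis .
  qed
  have "[(-1)^m * aa m (m - k) = (-1)^m * ((-1)^(m-k) * int (m choose k)^2)] (mod int p)"
    by (rule cong_mult[OF cong_refl h2])
  then have "[(-1)^m * aa m (m - k) = (-1)^k * int (m choose k)^2] (mod int p)"
    using h3 by (simp add: mult.assoc[symmetric])
  then show ?thesis using h1 cong_sym cong_trans by blast
qed


definition conv :: "(nat \<Rightarrow> int) \<Rightarrow> nat \<Rightarrow> nat \<Rightarrow> int" where
  "conv g m j = (\<Sum>k1\<in>{0..m}. \<Sum>k2\<in>{0..m}. if k1 + k2 = j then g k1 * g k2 else 0)"

lemma conv_sum:
  "(\<Sum>k1\<in>{0..m}. \<Sum>k2\<in>{0..m}. g k1 * g k2 * F (k1 + k2)) = (\<Sum>j\<in>{0..2*m}. conv g m j * F j)"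
proof -
  have "(\<Sum>j\<in>{0..2*m}. conv g m j * F j) =
        (\<Sum>j\<in>{0..2*m}. \<Sum>k1\<in>{0..m}. \<Sum>k2\<in>{0..m}. if k1 + k2 = j then g k1 * g k2 * F j else 0)"
    unfolding conv_def sum_distrib_right by (intro sum.cong refl) auto
  also have "\<dots> = (\<Sum>k1\<in>{0..m}. \<Sum>j\<in>{0..2*m}. \<Sum>k2\<in>{0..m}. if k1 + k2 = j then g k1 * g k2 * F j else 0)"
    by (rule sum.swap)
  also have "\<dots> = (\<Sum>k1\<in>{0..m}. \<Sum>k2\<in>{0..m}. \<Sum>j\<in>{0..2*m}. if k1 + k2 = j then g k1 * g k2 * F j else 0)"
    by (intro sum.cong refl sum.swap)
  also have "\<dots> = (\<Sum>k1\<in>{0..m}. \<Sum>k2\<in>{0..m}. g k1 * g k2 * F (k1 + k2))"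
    by (intro sum.cong refl) (auto simp: sum.delta)
  finally show ?thesis by simp
qed

lemma pie_bij:
  fixes P :: "nat \<Rightarrow> nat \<Rightarrow> nat \<Rightarrow> nat \<Rightarrow> bool"
  shows "bij_betw (\<lambda>k::nat\<Rightarrow>nat. (k 1, k 2, k 3, k 4)) {k::nat\<Rightarrow>nat. k \<in> {1..4} \<rightarrow>\<^sub>E {0..m} \<and> P (k 1) (k 2) (k 3) (k 4)}
     {x \<in> {0..m} \<times> {0..m} \<times> {0..m} \<times> {0..m}. case x of (a,b,c,d) \<Rightarrow> P a b c d}"
  (is "bij_betw ?h ?S ?T")
    unfolding bij_betw_def
  proof
    show "inj_on ?h ?S"
    proof (rule inj_onI)
      fix k k' assume k: "k \<in> ?S" and k': "k' \<in> ?S" and eq: "?h k = ?h k'"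
      show "k = k'"
      proof
        fix x
        show "k x = k' x"
        proof (cases "x \<in> {1..4}")
          case True
          then have "x = 1 \<or> x = 2 \<or> x = 3 \<or> x = 4" by auto
          then show ?thesis using eq by auto
        next
          case False
          then show ?thesis using k k' PiE_arb[of k "{1..4}" "\<lambda>_. {0..m}" x] PiE_arb[of k' "{1..4}" "\<lambda>_. {0..m}" x] by simp
        qed
      qed
    qed
    show "?h ` ?S = ?T"
    proof
      show "?h ` ?S \<subseteq> ?T"
      proof
        fix y assume "y \<in> ?h ` ?S"
        then obtain k where k: "k \<in> ?S" and y: "y = ?h k" by blast
        have "\<And>i. i \<in> {1..4} \<Longrightarrow> k i \<in> {0..m}" using k PiE_mem by blast
        then have "k 1 \<in> {0..m}" "k 2 \<in> {0..m}" "k 3 \<in> {0..m}" "k 4 \<in> {0..m}" by auto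
        then show "y \<in> ?T" using k y by simp
      qed
      show "?T \<subseteq> ?h ` ?S"
      proof
        fix x assume x: "x \<in> ?T"
        obtain a b c d where xd: "x = (a,b,c,d)" by (cases x) auto
        define kk where "kk = (\<lambda>i::nat. if i = 1 then a else if i = 2 then b else if i = 3 then c else if i = 4 then d else undefined)"
        have "kk \<in> {1..4} \<rightarrow>\<^sub>E {0..m}"
        proof (rule PiE_I)
          fix i :: nat assume "i \<in> {1..4}"
          then have "i = 1 \<or> i = 2 \<or> i = 3 \<or> i = 4" by auto
          then show "kk i \<in> {0..m}" using x xd unfolding kk_def by auto
        next
          fix i :: nat assume "i \<notin> {1..4}"
          then show "kk i = undefined" unfolding kk_def by auto
        qed
        moreover have "P (kk 1) (kk 2) (kk 3) (kk 4)" using x xd unfolding kk_def by simp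
        ultimately have kS: "kk \<in> ?S" by blast
        have xh: "x = ?h kk" using xd unfolding kk_def by simp
        show "x \<in> ?h ` ?S" by (rule image_eqI[where x=kk and f="?h", OF xh kS])
      qed
    qed
  qed

lemma pie_sum:
  fixes P :: "nat \<Rightarrow> nat \<Rightarrow> nat \<Rightarrow> nat \<Rightarrow> bool" and f :: "nat \<Rightarrow> nat \<Rightarrow> nat \<Rightarrow> nat \<Rightarrow> int"
  shows "(\<Sum>k\<in>{k::nat\<Rightarrow>nat. k \<in> {1..4} \<rightarrow>\<^sub>E {0..m} \<and> P (k 1) (k 2) (k 3) (k 4)}. f (k 1) (k 2) (k 3) (k 4))
    = (\<Sum>a\<in>{0..m}. \<Sum>b\<in>{0..m}. \<Sum>c\<in>{0..m}. \<Sum>d\<in>{0..m}. if P a b c d then f a b c d else 0)"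
proof -
  let ?S = "{k::nat\<Rightarrow>nat. k \<in> {1..4} \<rightarrow>\<^sub>E {0..m} \<and> P (k 1) (k 2) (k 3) (k 4)}"
  let ?A = "{0..m} \<times> {0..m} \<times> {0..m} \<times> {0..m}"
  let ?T = "{x \<in> ?A. case x of (a,b,c,d) \<Rightarrow> P a b c d}"
  let ?h = "\<lambda>k::nat\<Rightarrow>nat. (k 1, k 2, k 3, k 4)"
  let ?g = "\<lambda>(a,b,c,d). f a b c d"
  have bij: "bij_betw ?h ?S ?T" by (rule pie_bij)
  have "(\<Sum>k\<in>?S. f (k 1) (k 2) (k 3) (k 4)) = (\<Sum>k\<in>?S. ?g (?h k))" by simp
  also have "\<dots> = (\<Sum>x\<in>?T. ?g x)" by (rule sum.reindex_bij_betw[OF bij])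
  also have "\<dots> = (\<Sum>x\<in>?A. if (case x of (a,b,c,d) \<Rightarrow> P a b c d) then ?g x else 0)"
    by (rule sum.inter_filter) simp
  also have "\<dots> = (\<Sum>a\<in>{0..m}. \<Sum>b\<in>{0..m}. \<Sum>c\<in>{0..m}. \<Sum>d\<in>{0..m}. if P a b c d then f a b c d else 0)"
    by (simp only: sum.cartesian_product' prod.case)
  finally show ?thesis .
qed


lemma rev0: "(\<Sum>i\<in>{0..n::nat}. g i) = (\<Sum>i\<in>{0..n}. g (n - i))"
  using sum.atLeastAtMost_rev[of g 0 n] by simp

lemma c_sym:
  fixes p m j :: nat
  assumes "prime p" "p = 2*m+1" "j \<le> 2*m"
  shows "[conv (aa m) m (2*m - j) = conv (aa m) m j] (mod int p)"
proof -
  let ?A = "aa m"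
  let ?G = "\<lambda>k1 k2. if k1 + k2 = 2*m - j then ?A k1 * ?A k2 else 0"
  have "conv ?A m (2*m-j) = (\<Sum>k1\<in>{0..m}. \<Sum>k2\<in>{0..m}. ?G k1 k2)"
    unfolding conv_def by simp
  also have "\<dots> = (\<Sum>k1\<in>{0..m}. \<Sum>k2\<in>{0..m}. ?G (m - k1) k2)"
    by (rule rev0)
  also have "\<dots> = (\<Sum>k1\<in>{0..m}. \<Sum>k2\<in>{0..m}. ?G (m - k1) (m - k2))"
    by (intro sum.cong refl rev0)
  finally have eq: "conv ?A m (2*m-j) = (\<Sum>k1\<in>{0..m}. \<Sum>k2\<in>{0..m}. ?G (m - k1) (m - k2))" .
  have "[(\<Sum>k1\<in>{0..m}. \<Sum>k2\<in>{0..m}. ?G (m - k1) (m - k2)) = conv ?A m j] (mod int p)"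
    unfolding conv_def
  proof (intro cong_sum)
    fix k1 k2 assume k1: "k1 \<in> {0..m}" and k2: "k2 \<in> {0..m}"
    have ceq: "(m - k1) + (m - k2) = 2*m - j \<longleftrightarrow> k1 + k2 = j" using k1 k2 assms(3) by auto
    show "[?G (m - k1) (m - k2) = (if k1 + k2 = j then ?A k1 * ?A k2 else 0)] (mod int p)"
    proof (cases "k1 + k2 = j")
      case True
      have h1: "[?A k1 = (-1)^m * ?A (m - k1)] (mod int p)" using aa_sym[OF assms(1,2)] k1 by simp
      have h2: "[?A k2 = (-1)^m * ?A (m - k2)] (mod int p)" using aa_sym[OF assms(1,2)] k2 by simp
      have "[?A k1 * ?A k2 = ((-1)^m * ?A (m - k1)) * ((-1)^m * ?A (m - k2))] (mod int p)"
        by (rule cong_mult[OF h1 h2])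
      moreover have "((-1::int)^m * ?A (m - k1)) * ((-1)^m * ?A (m - k2)) = ?A (m - k1) * ?A (m - k2)"
      proof -
        have "((-1::int)^m) * ((-1)^m) = 1" by (simp add: power_add[symmetric])
        then show ?thesis by (simp add: algebra_simps)
      qed
      ultimately show ?thesis using True ceq by (simp add: cong_sym)
    next
      case False
      then show ?thesis using ceq by simp
    qed
  qed
  then show ?thesis using eq by simp
qed

lemma t4: "term4 m k = aa m (k 1) * aa m (k 2) * aa m (k 3) * aa m (k 4)"
proof -
  have "{1..4::nat} = {1,2,3,4}" by auto
  then show ?thesis unfolding term4_def aa_def by (simp add: algebra_simps)
qed

theorem lemma2p11:
  fixes p :: nat
  assumes "prime p" and "odd p"
  defines "m \<equiv> (p - 1) div 2"
  shows "[(\<Sum>k\<in>{k. k \<in> {1..4} \<rightarrow>\<^sub>E {0..m} \<and> k 1 + k 2 + k 3 + k 4 = p - 1}. term4 m k)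
        = (\<Sum>k\<in>{k. k \<in> {1..4} \<rightarrow>\<^sub>E {0..m} \<and> k 1 + k 2 = k 3 + k 4}. term4 m k)]
        (mod (int p)^2)"
proof -
  have pm: "p = 2*m+1" using assms(2) unfolding m_def by (auto elim: oddE)
  have p1: "p - 1 = 2*m" using pm by simp
  let ?A = "aa m"
  define c where "c = conv ?A m"
  have L1: "(\<Sum>k\<in>{k. k \<in> {1..4} \<rightarrow>\<^sub>E {0..m} \<and> k 1 + k 2 + k 3 + k 4 = p - 1}. term4 m k)
     = (\<Sum>a\<in>{0..m}. \<Sum>b\<in>{0..m}. \<Sum>c\<in>{0..m}. \<Sum>d\<in>{0..m}. if a + b + c + d = 2*m then ?A a * ?A b * ?A c * ?A d else 0)"
    using pie_sum[where m=m and P="\<lambda>a b c d. a + b + c + d = 2*m" and f="\<lambda>a b c d. ?A a * ?A b * ?A c * ?A d"]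
    unfolding p1 by (simp add: t4)
  also have "\<dots> = (\<Sum>a\<in>{0..m}. \<Sum>b\<in>{0..m}. ?A a * ?A b * c (2*m - (a + b)))"
    unfolding c_def conv_def sum_distrib_left
    by (intro sum.cong refl) (auto simp: algebra_simps)
  also have "\<dots> = (\<Sum>j\<in>{0..2*m}. c j * c (2*m - j))"
    unfolding c_def by (rule conv_sum)
  finally have L: "(\<Sum>k\<in>{k. k \<in> {1..4} \<rightarrow>\<^sub>E {0..m} \<and> k 1 + k 2 + k 3 + k 4 = p - 1}. term4 m k)
     = (\<Sum>j\<in>{0..2*m}. c j * c (2*m - j))" .
  have R1: "(\<Sum>k\<in>{k. k \<in> {1..4} \<rightarrow>\<^sub>E {0..m} \<and> k 1 + k 2 = k 3 + k 4}. term4 m k)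
     = (\<Sum>a\<in>{0..m}. \<Sum>b\<in>{0..m}. \<Sum>c\<in>{0..m}. \<Sum>d\<in>{0..m}. if a + b = c + d then ?A a * ?A b * ?A c * ?A d else 0)"
    using pie_sum[where m=m and P="\<lambda>a b c d. a + b = c + d" and f="\<lambda>a b c d. ?A a * ?A b * ?A c * ?A d"]
    by (simp add: t4)
  also have "\<dots> = (\<Sum>a\<in>{0..m}. \<Sum>b\<in>{0..m}. ?A a * ?A b * c (a + b))"
    unfolding c_def conv_def sum_distrib_left
    by (intro sum.cong refl) (auto simp: algebra_simps)
  also have "\<dots> = (\<Sum>j\<in>{0..2*m}. c j * c j)"
    unfolding c_def by (rule conv_sum)
  finally have R: "(\<Sum>k\<in>{k. k \<in> {1..4} \<rightarrow>\<^sub>E {0..m} \<and> k 1 + k 2 = k 3 + k 4}. term4 m k)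
     = (\<Sum>j\<in>{0..2*m}. c j * c j)" .
  define X where "X = (\<Sum>j\<in>{0..2*m}. c j * c (2*m - j)) - (\<Sum>j\<in>{0..2*m}. c j * c j)"
  have X1: "X = (\<Sum>j\<in>{0..2*m}. c j * (c (2*m - j) - c j))"
    unfolding X_def sum_subtractf[symmetric] by (simp add: algebra_simps)
  also have "\<dots> = (\<Sum>j\<in>{0..2*m}. c (2*m - j) * (c (2*m - (2*m - j)) - c (2*m - j)))"
    by (rule rev0)
  also have "\<dots> = (\<Sum>j\<in>{0..2*m}. c (2*m - j) * (c j - c (2*m - j)))"
    by (intro sum.cong refl) auto
  finally have X2: "X = (\<Sum>j\<in>{0..2*m}. c (2*m - j) * (c j - c (2*m - j)))" .
  have "2 * X = (\<Sum>j\<in>{0..2*m}. - ((c j - c (2*m - j))^2))"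
  proof -
    have "2 * X = X + X" by simp
    also have "\<dots> = (\<Sum>j\<in>{0..2*m}. c j * (c (2*m - j) - c j) + c (2*m - j) * (c j - c (2*m - j)))"
      using X1 X2 by (simp add: sum.distrib)
    also have "\<dots> = (\<Sum>j\<in>{0..2*m}. - ((c j - c (2*m - j))^2))"
      by (intro sum.cong refl) (simp add: power2_eq_square algebra_simps)
    finally show ?thesis .
  qed
  moreover have "(int p)^2 dvd (\<Sum>j\<in>{0..2*m}. - ((c j - c (2*m - j))^2))"
  proof (intro dvd_sum)
    fix j assume j: "j \<in> {0..2*m}"
    have "[c (2*m - j) = c j] (mod int p)" unfolding c_def using c_sym[OF assms(1) pm] j by simp
    then have "int p dvd c j - c (2*m - j)" by (metis cong_iff_dvd_diff cong_sym)
    then have "(int p)^2 dvd (c j - c (2*m - j))^2" by (rule dvd_power_same)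
    then show "(int p)^2 dvd - ((c j - c (2*m - j))^2)" by simp
  qed
  ultimately have d2: "(int p)^2 dvd X * 2" by (simp add: mult.commute)
  have "coprime ((int p)^2) 2"
    using assms(2) by (simp add: coprime_right_2_iff_odd)
  then have "(int p)^2 dvd X" using d2 coprime_dvd_mult_left_iff by blast
  then show ?thesis unfolding L R cong_iff_dvd_diff X_def .
qed

end
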